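(* Let $Z$ be a compact metrisable space and $\mathfrak{X}$ a $Z$-valued switched Bebutov shift. Let $(\psi_n)_{n=1}^\infty$ be a sequence in $\mathfrak{X}$, and suppose there is a strictly increasing unbounded real sequence $(\tau_n)_{n=0}^\infty$ with $\tau_0=0$ such that $\psi_n(\tau_n)=\psi_{n+1}(\tau_n)$ for each $n\ge1$. Let $\xi\colon[0,\infty)\to Z$ be the function which coincides with $\psi_n$ on $[\tau_{n-1},\tau_n]$ for each $n\ge1$. Then $\xi\in\mathfrak{X}$.
   Context: $C([0,\infty),Z)$ carries the compact-open topology (uniform convergence on compact sets). $(\sigma^\tau\phi)(t)\coloneq\phi(\tau+t)$. A $Z$-valued Bebutov shift is a set $\mathfrak{X}\subseteq C([0,\infty),Z)$, compact in the compact-open topology, with $\sigma^\tau\phi\in\mathfrak{X}$ for all $\phi\in\mathfrak{X}$, $\tau\ge0$. It is switched if moreover: whenever $\phi_1,\phi_2\in\mathfrak{X}$ satisfy $\phi_1(\tau)=\phi_2(\tau)$ for some $\tau>0$, the function $\psi$ equal to $\phi_1$ on $[0,\tau]$ and to $\phi_2$ on $[\tau,\infty)$ belongs to $\mathfrak{X}$. *)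

theory Defs
  imports "HOL-Analysis.Analysis"
begin

text \<open>Elements of C([0,\<infinity>),Z) are represented as functions real \<Rightarrow> 'z that are
continuous on [0,\<infinity>) and extensional (equal to undefined) on the negative reals.\<close>

definition Cpos :: "(real \<Rightarrow> 'z::metric_space) set" where
  "Cpos = {\<phi>. continuous_on {0..} \<phi> \<and> (\<forall>t<0. \<phi> t = undefined)}"

text \<open>Compact-open topology = topology of uniform convergence on compact sets
(Z metric): U is open iff around each of its points it contains a basic
neighbourhood {\<psi>. sup over [0,T] of dist < \<epsilon>}.\<close>

definition co_open :: "(real \<Rightarrow> 'z::metric_space) set \<Rightarrow> bool" where
  "co_open U \<longleftrightarrow> U \<subseteq> Cpos \<and>
     (\<forall>\<phi>\<in>U. \<exists>T>0. \<exists>e>0. {\<psi>\<in>Cpos. \<forall>t\<in>{0..T}. dist (\<phi> t) (\<psi> t) < e} \<subseteq> U)"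

lemma nb_mono:
  fixes \<phi> :: "real \<Rightarrow> 'z::metric_space"
  assumes "T \<le> T'" "e' \<le> e"
  shows "{\<psi>\<in>C. \<forall>t\<in>{0..T'}. dist (\<phi> t) (\<psi> t) < e'} \<subseteq> {\<psi>\<in>C. \<forall>t\<in>{0..T}. dist (\<phi> t) (\<psi> t) < e}"
proof
  fix \<psi> assume h: "\<psi> \<in> {\<psi>\<in>C. \<forall>t\<in>{0..T'}. dist (\<phi> t) (\<psi> t) < e'}"
  show "\<psi> \<in> {\<psi>\<in>C. \<forall>t\<in>{0..T}. dist (\<phi> t) (\<psi> t) < e}"
  proof -
    have "\<forall>t\<in>{0..T}. dist (\<phi> t) (\<psi> t) < e"
    proof
      fix t :: real assume "t \<in> {0..T}"
      then have "dist (\<phi> t) (\<psi> t) < e'" using h assms(1) by simp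
      then show "dist (\<phi> t) (\<psi> t) < e" using assms(2) by linarith
    qed
    then show ?thesis using h by simp
  qed
qed

lemma istopology_co_open: "istopology co_open"
  unfolding istopology_def
proof (intro conjI allI impI)
  fix S T :: "(real \<Rightarrow> 'a) set"
  assume "co_open S" "co_open T"
  then have S: "S \<subseteq> Cpos" "\<forall>\<phi>\<in>S. \<exists>T>0. \<exists>e>0. {\<psi>\<in>Cpos. \<forall>t\<in>{0..T}. dist (\<phi> t) (\<psi> t) < e} \<subseteq> S"
    and T: "T \<subseteq> Cpos" "\<forall>\<phi>\<in>T. \<exists>T'>0. \<exists>e>0. {\<psi>\<in>Cpos. \<forall>t\<in>{0..T'}. dist (\<phi> t) (\<psi> t) < e} \<subseteq> T"
    unfolding co_open_def by auto
  show "co_open (S \<inter> T)"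
    unfolding co_open_def
  proof (intro conjI ballI)
    show "S \<inter> T \<subseteq> Cpos" using S by auto
    fix \<phi> assume p: "\<phi> \<in> S \<inter> T"
    from S p obtain T1 e1 where 1: "T1>0" "e1>0" "{\<psi>\<in>Cpos. \<forall>t\<in>{0..T1}. dist (\<phi> t) (\<psi> t) < e1} \<subseteq> S" by blast
    from T p obtain T2 e2 where 2: "T2>0" "e2>0" "{\<psi>\<in>Cpos. \<forall>t\<in>{0..T2}. dist (\<phi> t) (\<psi> t) < e2} \<subseteq> T" by blast
    show "\<exists>T'>0. \<exists>e>0. {\<psi>\<in>Cpos. \<forall>t\<in>{0..T'}. dist (\<phi> t) (\<psi> t) < e} \<subseteq> S \<inter> T"
    proof -
      have A: "{\<psi>\<in>Cpos. \<forall>t\<in>{0..max T1 T2}. dist (\<phi> t) (\<psi> t) < min e1 e2}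
            \<subseteq> {\<psi>\<in>Cpos. \<forall>t\<in>{0..T1}. dist (\<phi> t) (\<psi> t) < e1}" by (rule nb_mono) auto
      have B: "{\<psi>\<in>Cpos. \<forall>t\<in>{0..max T1 T2}. dist (\<phi> t) (\<psi> t) < min e1 e2}
            \<subseteq> {\<psi>\<in>Cpos. \<forall>t\<in>{0..T2}. dist (\<phi> t) (\<psi> t) < e2}" by (rule nb_mono) auto
      have C: "max T1 T2 > 0" "min e1 e2 > 0" using 1 2 by auto
      have "{\<psi>\<in>Cpos. \<forall>t\<in>{0..max T1 T2}. dist (\<phi> t) (\<psi> t) < min e1 e2} \<subseteq> S \<inter> T"
        using A B 1(3) 2(3) by (meson Int_greatest order_trans)
      then show ?thesis using C by blast
    qed
  qed
next
  fix K :: "(real \<Rightarrow> 'a) set set"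
  assume "\<forall>S\<in>K. co_open S"
  then have K: "\<And>S. S \<in> K \<Longrightarrow> S \<subseteq> Cpos \<and> (\<forall>\<phi>\<in>S. \<exists>T>0. \<exists>e>0. {\<psi>\<in>Cpos. \<forall>t\<in>{0..T}. dist (\<phi> t) (\<psi> t) < e} \<subseteq> S)"
    unfolding co_open_def by blast
  show "co_open (\<Union>K)" unfolding co_open_def
  proof (intro conjI ballI)
    show "\<Union>K \<subseteq> Cpos" using K by blast
    fix \<phi> assume "\<phi> \<in> \<Union>K"
    then obtain S where S: "S \<in> K" "\<phi> \<in> S" by blast
    then obtain T e where "T>0" "e>0" "{\<psi>\<in>Cpos. \<forall>t\<in>{0..T}. dist (\<phi> t) (\<psi> t) < e} \<subseteq> S"
      using K by blast
    moreover have "S \<subseteq> \<Union>K" using S by blast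
    ultimately show "\<exists>T>0. \<exists>e>0. {\<psi>\<in>Cpos. \<forall>t\<in>{0..T}. dist (\<phi> t) (\<psi> t) < e} \<subseteq> \<Union>K"
      by blast
  qed
qed

definition co_topology :: "(real \<Rightarrow> 'z::metric_space) topology" where
  "co_topology = topology co_open"

definition bshift :: "real \<Rightarrow> (real \<Rightarrow> 'z) \<Rightarrow> (real \<Rightarrow> 'z)" where
  "bshift \<tau> \<phi> = (\<lambda>t. if t < 0 then undefined else \<phi> (\<tau> + t))"

definition bebutov_shift :: "(real \<Rightarrow> 'z::metric_space) set \<Rightarrow> bool" where
  "bebutov_shift X \<longleftrightarrow> X \<subseteq> Cpos \<and> compactin co_topology X \<and>
     (\<forall>\<phi>\<in>X. \<forall>\<tau>\<ge>0. bshift \<tau> \<phi> \<in> X)"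

definition switched_bebutov_shift :: "(real \<Rightarrow> 'z::metric_space) set \<Rightarrow> bool" where
  "switched_bebutov_shift X \<longleftrightarrow> bebutov_shift X \<and>
     (\<forall>\<phi>1\<in>X. \<forall>\<phi>2\<in>X. \<forall>\<tau>>0. \<phi>1 \<tau> = \<phi>2 \<tau> \<longrightarrow>
        (\<lambda>t. if t < 0 then undefined else if t \<le> \<tau> then \<phi>1 t else \<phi>2 t) \<in> X)"

end

theory Submission
  imports Defs
begin

primrec chi :: "(nat \<Rightarrow> real \<Rightarrow> 'z) \<Rightarrow> (nat \<Rightarrow> real) \<Rightarrow> nat \<Rightarrow> real \<Rightarrow> 'z" where
  "chi \<psi> \<tau> 0 = \<psi> 1"
| "chi \<psi> \<tau> (Suc k) = (\<lambda>t. if t < 0 then undefined else if t \<le> \<tau> (Suc k) then chi \<psi> \<tau> k t else \<psi> (Suc (Suc k)) t)"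

lemma openin_co: "openin co_topology U \<longleftrightarrow> co_open U"
  unfolding co_topology_def using istopology_co_open topology_inverse' by metis

theorem lemma2p19:
  fixes X :: "(real \<Rightarrow> 'z::metric_space) set"
    and \<psi> :: "nat \<Rightarrow> real \<Rightarrow> 'z"
    and \<tau> :: "nat \<Rightarrow> real"
    and \<xi> :: "real \<Rightarrow> 'z"
  assumes "compact (UNIV :: 'z set)"
    and "switched_bebutov_shift X"
    and "\<forall>n\<ge>1. \<psi> n \<in> X"
    and "strict_mono \<tau>" and "\<forall>M. \<exists>n. \<tau> n > M" and "\<tau> 0 = 0"
    and "\<forall>n\<ge>1. \<psi> n (\<tau> n) = \<psi> (Suc n) (\<tau> n)"
    and "\<forall>n\<ge>1. \<forall>t\<in>{\<tau> (n - 1)..\<tau> n}. \<xi> t = \<psi> n t"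
    and "\<forall>t<0. \<xi> t = undefined"
  shows "\<xi> \<in> X"
proof (rule ccontr)
  assume nX: "\<xi> \<notin> X"
  have sw: "\<forall>\<phi>1\<in>X. \<forall>\<phi>2\<in>X. \<forall>\<tau>>0. \<phi>1 \<tau> = \<phi>2 \<tau> \<longrightarrow>
        (\<lambda>t. if t < 0 then undefined else if t \<le> \<tau> then \<phi>1 t else \<phi>2 t) \<in> X"
    and XC: "X \<subseteq> Cpos" and cpt: "compactin co_topology X"
    using assms(2) unfolding switched_bebutov_shift_def bebutov_shift_def by auto
  have tpos: "\<tau> (Suc k) > 0" for k
    using assms(4,6) by (metis strict_mono_less zero_less_Suc)
  have P: "chi \<psi> \<tau> k \<in> X \<and> (\<forall>t\<in>{0..\<tau> (Suc k)}. chi \<psi> \<tau> k t = \<xi> t)" for k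
  proof (induction k)
    case 0
    then show ?case using assms(3,6,8) by auto
  next
    case (Suc k)
    have m: "\<tau> k \<le> \<tau> (Suc k)" "\<tau> (Suc k) \<le> \<tau> (Suc (Suc k))"
      using assms(4) by (simp_all add: strict_mono_leD)
    have "chi \<psi> \<tau> k (\<tau> (Suc k)) = \<xi> (\<tau> (Suc k))"
      using Suc.IH tpos[of k] by auto
    also have "\<dots> = \<psi> (Suc k) (\<tau> (Suc k))"
      using assms(8) m by (metis One_nat_def atLeastAtMost_iff diff_Suc_1 le_add1 order_refl plus_1_eq_Suc)
    also have "\<dots> = \<psi> (Suc (Suc k)) (\<tau> (Suc k))" using assms(7) by simp
    finally have eq: "chi \<psi> \<tau> k (\<tau> (Suc k)) = \<psi> (Suc (Suc k)) (\<tau> (Suc k))" .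
    have inX: "chi \<psi> \<tau> (Suc k) \<in> X"
      using sw Suc.IH assms(3) tpos[of k] eq by simp
    have "\<forall>t\<in>{0..\<tau> (Suc (Suc k))}. chi \<psi> \<tau> (Suc k) t = \<xi> t"
    proof
      fix t assume t: "t \<in> {0..\<tau> (Suc (Suc k))}"
      show "chi \<psi> \<tau> (Suc k) t = \<xi> t"
      proof (cases "t \<le> \<tau> (Suc k)")
        case True then show ?thesis using Suc.IH t by auto
      next
        case False
        then have "\<xi> t = \<psi> (Suc (Suc k)) t" using assms(8) t
          by (metis atLeastAtMost_iff diff_Suc_1 le_add1 less_le_not_le nle_le plus_1_eq_Suc)
        then show ?thesis using False t by auto
      qed
    qed
    then show ?case using inX by blast
  qed
  define U where "U = (\<lambda>(t::real, r::real). {\<phi>\<in>Cpos. r < dist (\<phi> t) (\<xi> t)})"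
  define A :: "(real \<times> real) set" where "A = {0..} \<times> {0<..}"
  have opn: "\<forall>B\<in>U ` A. openin co_topology B"
  proof
    fix B assume "B \<in> U ` A"
    then obtain t r where B: "B = {\<phi>\<in>Cpos. r < dist (\<phi> t) (\<xi> t)}" and tr: "t \<ge> 0"
      unfolding U_def A_def by auto
    have "co_open B" unfolding co_open_def
    proof (intro conjI ballI)
      show "B \<subseteq> Cpos" using B by auto
      fix \<phi> assume "\<phi> \<in> B"
      then have h: "r < dist (\<phi> t) (\<xi> t)" using B by auto
      have "{\<psi>\<in>Cpos. \<forall>s\<in>{0..t+1}. dist (\<phi> s) (\<psi> s) < dist (\<phi> t) (\<xi> t) - r} \<subseteq> B"
      proof
        fix \<phi>' assume a: "\<phi>' \<in> {\<psi>\<in>Cpos. \<forall>s\<in>{0..t+1}. dist (\<phi> s) (\<psi> s) < dist (\<phi> t) (\<xi> t) - r}"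
        then have "dist (\<phi> t) (\<phi>' t) < dist (\<phi> t) (\<xi> t) - r" using tr by auto
        moreover have "dist (\<phi> t) (\<xi> t) \<le> dist (\<phi> t) (\<phi>' t) + dist (\<phi>' t) (\<xi> t)"
          by (rule dist_triangle)
        ultimately show "\<phi>' \<in> B" using a B by auto
      qed
      then show "\<exists>T>0. \<exists>e>0. {\<psi>\<in>Cpos. \<forall>t\<in>{0..T}. dist (\<phi> t) (\<psi> t) < e} \<subseteq> B"
        using h tr by (intro exI[of _ "t+1"] conjI exI[of _ "dist (\<phi> t) (\<xi> t) - r"]) auto
    qed
    then show "openin co_topology B" by (simp add: openin_co)
  qed
  have cov: "X \<subseteq> \<Union>(U ` A)"
  proof
    fix \<phi> assume p: "\<phi> \<in> X"
    then have "\<phi> \<noteq> \<xi>" using nX by auto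
    then obtain t where "\<phi> t \<noteq> \<xi> t" by auto
    moreover have "\<phi> t = \<xi> t" if "t < 0" using p XC assms(9) that unfolding Cpos_def by auto
    ultimately have t: "t \<ge> 0" "dist (\<phi> t) (\<xi> t) > 0" by force+
    then have "\<phi> \<in> U (t, dist (\<phi> t) (\<xi> t) / 2)" "(t, dist (\<phi> t) (\<xi> t) / 2) \<in> A"
      using p XC unfolding U_def A_def by auto
    then show "\<phi> \<in> \<Union>(U ` A)" by blast
  qed
  obtain F where F: "finite F" "F \<subseteq> U ` A" "X \<subseteq> \<Union>F"
    using cpt opn cov unfolding compactin_def by metis
  obtain G where G: "G \<subseteq> A" "finite G" "F = U ` G"
    using F finite_subset_image by metis
  obtain M where M: "\<forall>x\<in>fst ` G. x \<le> M"
    using G(2) by (meson finite_imageI finite_has_maximal2 order_refl ex_in_conv bdd_above_def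
        bdd_above_finite[of "fst ` G"] bdd_above.unfold)
  obtain n where n: "\<tau> n > M" using assms(5) by auto
  have "\<tau> (Suc n) > M" using n assms(4) by (meson lessI order_less_trans strict_monoD)
  have "chi \<psi> \<tau> n \<in> \<Union>F" using P F(3) by blast
  then obtain t r where tr: "(t, r) \<in> G" "chi \<psi> \<tau> n \<in> U (t, r)" using G(3) by auto
  then have "t \<le> M" "t \<ge> 0" "r > 0" using M G(1) unfolding A_def by force+
  then have "chi \<psi> \<tau> n t = \<xi> t" using P \<open>\<tau> (Suc n) > M\<close> by auto
  then show False using tr(2) \<open>r > 0\<close> unfolding U_def by auto
qed

end
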